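(* Let $n$ be a positive odd integer. Then $$ \sum_{k=0}^{n-1}\frac{(aq;q^2)_k\,(q/a;q^2)_k}{(q^2;q^2)_k^2} \equiv (-1)^{(n-1)/2}q^{(1-n^2)/4}\pmod{(1-aq^n)(a-q^n)}. $$
   Context: $a,q$ are indeterminates. The $q$-shifted factorial is $(y;q)_0=1$ and $(y;q)_m=(1-y)(1-yq)\cdots(1-yq^{m-1})$ for $m\geqslant1$. For rational functions $A,B$ and a polynomial $P$, $A\equiv B\pmod P$ means $A-B=P\cdot C/D$ for polynomials $C,D$ with $D$ coprime to $P$. *)

theory Defs
  imports "HOL-Computational_Algebra.Computational_Algebra"
begin

text \<open>Bivariate polynomials over the rationals in the indeterminates a (inner variable)
and q (outer variable), and rational functions as their fraction field.\<close>

type_synonym bipoly = "rat poly poly"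
type_synonym ratfun = "rat poly poly fract"

definition A_pol :: bipoly where "A_pol = [:[:0, 1:]:]"
definition Q_pol :: bipoly where "Q_pol = [:0, 1:]"

definition a_var :: ratfun where "a_var = to_fract A_pol"
definition q_var :: ratfun where "q_var = to_fract Q_pol"

definition qpoch :: "ratfun \<Rightarrow> ratfun \<Rightarrow> nat \<Rightarrow> ratfun" where
  "qpoch y p m = (\<Prod>j<m. 1 - y * p ^ j)"

definition rf_cong :: "ratfun \<Rightarrow> ratfun \<Rightarrow> bipoly \<Rightarrow> bool" where
  "rf_cong A B P \<longleftrightarrow> (\<exists>C D :: bipoly. D \<noteq> 0 \<and> coprime D P \<and>
      A - B = to_fract P * to_fract C / to_fract D)"

end

theory Submission
  imports Defs "HOL-Computational_Algebra.Field_as_Ring"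
begin

definition Zp :: "'a::field \<Rightarrow> 'a \<Rightarrow> nat \<Rightarrow> 'a" where "Zp p z k = (\<Prod>j<k. 1 - p^j * z)"
definition Wp :: "'a::field \<Rightarrow> 'a \<Rightarrow> nat \<Rightarrow> 'a" where "Wp p w k = (\<Prod>j<k. 1 - p^(j+1) * w)"
definition Dp :: "'a::field \<Rightarrow> nat \<Rightarrow> 'a" where "Dp p k = (\<Prod>j<k. 1 - p^(j+1))"
definition tt :: "'a::field \<Rightarrow> 'a \<Rightarrow> nat \<Rightarrow> 'a" where
  "tt p w k = Zp p (inverse w) k * Wp p w k / (Dp p k)^2"

lemma Zp_shift:
  assumes "p \<noteq> 0" "w \<noteq> 0"
  shows "Zp p (inverse (p*w)) (Suc k) = (1 - inverse (p*w)) * Zp p (inverse w) k"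
proof (induction k)
  case 0 then show ?case by (simp add: Zp_def)
next
  case (Suc k)
  have "Zp p (inverse (p*w)) (Suc (Suc k)) = Zp p (inverse (p*w)) (Suc k) * (1 - p^(Suc k) * inverse (p*w))"
    by (simp add: Zp_def)
  also have "p^(Suc k) * inverse (p*w) = p^k * inverse w" using assms by (simp add: field_simps)
  also have "Zp p (inverse (p*w)) (Suc k) = (1 - inverse (p*w)) * Zp p (inverse w) k" by (rule Suc)
  also have "(1 - inverse (p*w)) * Zp p (inverse w) k * (1 - p^k * inverse w) = (1 - inverse (p*w)) * Zp p (inverse w) (Suc k)"
    by (simp add: Zp_def mult.assoc)
  finally show ?case .
qed

lemma Wp_shift:
  shows "Wp p w (Suc k) = (1 - p * w) * Wp p (p*w) k"
proof (induction k)
  case 0 then show ?case by (simp add: Wp_def)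
next
  case (Suc k)
  have "Wp p w (Suc (Suc k)) = Wp p w (Suc k) * (1 - p^(Suc k + 1) * w)" by (simp add: Wp_def)
  also have "p^(Suc k + 1) * w = p^(k+1) * (p*w)" by (simp add: field_simps)
  finally show ?case using Suc by (simp add: Wp_def mult.assoc)
qed

lemma core:
  fixes p s w :: "'a::field"
  shows "(p*w+1)*(1-p*(s*w))^2 - (1-p*w)*(1-p*(p*w)*(s*w)) + (1-s)*(1-p*w) = (p*w+1)*(1-s)*(1-p*(p*w)*(s*w))"
  by (simp add: algebra_simps power2_eq_square)

lemma ratid:
  fixes p s w Z W D :: "'a::field"
  assumes "p \<noteq> 0" "w \<noteq> 0" "1 - p*w \<noteq> 0" "1 - p*(s*w) \<noteq> 0" "D \<noteq> 0"
  defines "al \<equiv> (p*w+1)/(1-p*w)"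
  shows "al * Z * W / (D^2 * (p*w))
     + (1 - inverse (p*w)) * Z * (W * (1 - p*(p*w)*(s*w))) / (1 - p*w) / (D * (1 - p*(s*w)))^2
     + Z * (1 - s) * W / (D * (1 - p*(s*w)))^2 / (p*w)
   = al * (Z * (1 - s)) * (W * (1 - p*(p*w)*(s*w))) / ((D * (1 - p*(s*w)))^2 * (p*w))"
proof -
  define c where "c = p*w"
  define v where "v = 1 - p*(s*w)"
  define y where "y = 1-p*(p*w)*(s*w)"
  have c0: "c \<noteq> 0" "1 - c \<noteq> 0" "v \<noteq> 0" using assms by (auto simp: c_def v_def)
  have cr: "(c+1)*v^2 - (1-c)*y + (1-s)*(1-c) = (c+1)*(1-s)*y"
    using core[of p w s] by (simp add: c_def v_def y_def)
  define iD where "iD = inverse D"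
  define iv where "iv = inverse v"
  define ic where "ic = inverse c"
  define ie where "ie = inverse (1-c)"
  have r: "D*iD = 1" "v*iv = 1" "c*ic = 1" "(1-c)*ie = 1"
    using c0 assms(5) by (auto simp: iD_def iv_def ic_def ie_def)
  have "(c+1)*ie*Z*W*(iD^2*ic) + (1-ic)*Z*(W*y)*ie*(iD^2*iv^2) + Z*(1-s)*W*(iD^2*iv^2)*ic
     = (c+1)*ie*(Z*(1-s))*(W*y)*(iD^2*iv^2*ic)"
  proof -
    define K where "K = Z*W*iD^2*iv^2*ie*ic"
    have t1: "(c+1)*ie*Z*W*(iD^2*ic) = K*((c+1)*v^2)"
    proof -
      have "(c+1)*ie*Z*W*(iD^2*ic) = (c+1)*ie*Z*W*(iD^2*ic) * (v*iv)^2" using r by simp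
      also have "\<dots> = K*((c+1)*v^2)" by (simp add: K_def power2_eq_square mult_ac)
      finally show ?thesis .
    qed
    have t2: "(1-ic)*Z*(W*y)*ie*(iD^2*iv^2) = K*((c - 1)*y)"
    proof -
      have "K*((c - 1)*y) = Z*W*iD^2*iv^2*ie*y*(c*ic - ic)" by (simp add: K_def algebra_simps)
      also have "\<dots> = (1-ic)*Z*(W*y)*ie*(iD^2*iv^2)" using r by (simp add: algebra_simps)
      finally show ?thesis by (rule sym)
    qed
    have t3: "Z*(1-s)*W*(iD^2*iv^2)*ic = K*((1-s)*(1-c))"
    proof -
      have "K*((1-s)*(1-c)) = Z*(1-s)*W*(iD^2*iv^2)*ic*((1-c)*ie)" by (simp add: K_def mult_ac)
      then show ?thesis using r by (metis mult_1_right)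
    qed
    have t4: "(c+1)*ie*(Z*(1-s))*(W*y)*(iD^2*iv^2*ic) = K*((c+1)*(1-s)*y)"
      by (simp add: K_def mult_ac)
    have "K*((c+1)*v^2) + K*((c - 1)*y) + K*((1-s)*(1-c)) = K*((c+1)*(1-s)*y)"
      using arg_cong[OF cr, of "\<lambda>x. K*x"] by (simp add: algebra_simps)
    then show ?thesis unfolding t1 t2 t3 t4 .
  qed
  then have "al * Z * W / (D^2 * (p*w))
     + (1 - inverse (p*w)) * Z * (W * y) / (1 - p*w) / (D * v)^2
     + Z * (1 - s) * W / (D * v)^2 / (p*w)
     = al * (Z * (1 - s)) * (W * y) / ((D * v)^2 * (p*w))"
    unfolding al_def c_def[symmetric] iD_def iv_def ic_def ie_def
    by (simp add: divide_inverse power_mult_distrib inverse_mult_distrib mult.assoc power_inverse)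
  then show ?thesis by (simp add: v_def y_def)
qed

lemma wz:
  fixes p w :: "'a::field"
  assumes p0: "p \<noteq> 0" and w0: "w \<noteq> 0" and pw: "1 - p*w \<noteq> 0" and D0: "\<And>i. 1 - p^(Suc i) \<noteq> 0"
  shows "(\<Sum>i<Suc k. tt p (p*w) i + tt p w i / (p*w))
     = (p*w+1)/(1-p*w) * Zp p (inverse w) k * Wp p w (Suc k) / ((Dp p k)^2 * (p*w))"
proof (induction k)
  case 0
  have "1 + 1 / (p*w) = (p*w+1)/(1-p*w) * (1 - p*w) / (p*w)"
    using p0 w0 pw by (simp add: field_simps)
  then show ?case by (simp add: tt_def Zp_def Wp_def Dp_def)
next
  case (Suc k)
  define s where "s = p^k * inverse w"
  have sw: "s*w = p^k" using w0 by (simp add: s_def)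
  have Dk: "Dp p k \<noteq> 0" using D0 by (simp add: Dp_def)
  have v: "1 - p*(s*w) \<noteq> 0" using D0[of k] by (simp add: sw)
  have e1: "tt p (p*w) (Suc k) = (1 - inverse (p*w)) * Zp p (inverse w) k * (Wp p w (Suc k) * (1 - p*(p*w)*(s*w))) / (1 - p*w) / (Dp p k * (1 - p*(s*w)))^2"
  proof -
    have "Wp p w (Suc (Suc k)) = (1 - p*w) * Wp p (p*w) (Suc k)" by (rule Wp_shift)
    then have "Wp p (p*w) (Suc k) = Wp p w (Suc (Suc k)) / (1 - p*w)" using pw by (simp add: field_simps)
    also have "Wp p w (Suc (Suc k)) = Wp p w (Suc k) * (1 - p*(p*w)*(s*w))"
      by (simp add: Wp_def sw mult_ac)
    finally have "Wp p (p*w) (Suc k) = Wp p w (Suc k) * (1 - p*(p*w)*(s*w)) / (1 - p*w)" .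
    moreover have "Dp p (Suc k) = Dp p k * (1 - p*(s*w))" by (simp add: Dp_def sw)
    ultimately show ?thesis unfolding tt_def Zp_shift[OF p0 w0] by (simp add: mult.assoc)
  qed
  have e2: "tt p w (Suc k) = Zp p (inverse w) k * (1 - s) * Wp p w (Suc k) / (Dp p k * (1 - p*(s*w)))^2"
  proof -
    have "Zp p (inverse w) (Suc k) = Zp p (inverse w) k * (1 - s)" by (simp add: Zp_def s_def)
    moreover have "Dp p (Suc k) = Dp p k * (1 - p*(s*w))" by (simp add: Dp_def sw)
    ultimately show ?thesis unfolding tt_def by simp
  qed
  have e3: "Zp p (inverse w) (Suc k) = Zp p (inverse w) k * (1 - s)" by (simp add: Zp_def s_def)
  have e4: "Wp p w (Suc (Suc k)) = Wp p w (Suc k) * (1 - p*(p*w)*(s*w))"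
    by (simp add: Wp_def sw mult_ac)
  have e5: "Dp p (Suc k) = Dp p k * (1 - p*(s*w))" by (simp add: Dp_def sw)
  have "(\<Sum>i<Suc (Suc k). tt p (p*w) i + tt p w i / (p*w))
     = (\<Sum>i<Suc k. tt p (p*w) i + tt p w i / (p*w)) + (tt p (p*w) (Suc k) + tt p w (Suc k) / (p*w))"
    by simp
  also have "\<dots> = (p*w+1)/(1-p*w) * Zp p (inverse w) k * Wp p w (Suc k) / ((Dp p k)^2 * (p*w))
     + (1 - inverse (p*w)) * Zp p (inverse w) k * (Wp p w (Suc k) * (1 - p*(p*w)*(s*w))) / (1 - p*w) / (Dp p k * (1 - p*(s*w)))^2
     + Zp p (inverse w) k * (1 - s) * Wp p w (Suc k) / (Dp p k * (1 - p*(s*w)))^2 / (p*w)"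
    unfolding Suc e1 e2 by (simp add: add.assoc)
  also have "\<dots> = (p*w+1)/(1-p*w) * (Zp p (inverse w) k * (1 - s)) * (Wp p w (Suc k) * (1 - p*(p*w)*(s*w))) / ((Dp p k * (1 - p*(s*w)))^2 * (p*w))"
    by (rule ratid[OF p0 w0 pw v Dk])
  also have "\<dots> = (p*w+1)/(1-p*w) * Zp p (inverse w) (Suc k) * Wp p w (Suc (Suc k)) / ((Dp p (Suc k))^2 * (p*w))"
    unfolding e3 e4 e5 ..
  finally show ?case .
qed

lemma Zp_zero:
  fixes p :: "'a::field"
  assumes "p \<noteq> 0" "m < k"
  shows "Zp p (inverse (p^m)) k = 0"
proof -
  have "m \<in> {..<k}" using assms by simp
  moreover have "1 - p^m * inverse (p^m) = 0" using assms by simp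
  ultimately show ?thesis unfolding Zp_def by (meson finite_lessThan prod_zero_iff)
qed

lemma tt_zero:
  fixes p :: "'a::field"
  assumes "p \<noteq> 0" "m < k"
  shows "tt p (p^m) k = 0"
  using Zp_zero[OF assms] by (simp add: tt_def)

lemma sum_closed:
  fixes p :: "'a::field"
  assumes p0: "p \<noteq> 0" and D0: "\<And>i. 1 - p^(Suc i) \<noteq> 0"
  shows "(\<Sum>k<Suc m. tt p (p^m) k) = (-1)^m / p^(m*(m+1) div 2)"
proof (induction m)
  case 0
  then show ?case by (simp add: tt_def Zp_def Wp_def Dp_def)
next
  case (Suc m)
  have w0: "p^m \<noteq> 0" using p0 by simp
  have pw: "1 - p * p^m \<noteq> 0" using D0[of m] by simp
  have "(\<Sum>i<Suc (Suc m). tt p (p*p^m) i + tt p (p^m) i / (p*p^m))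
     = (p*p^m+1)/(1-p*p^m) * Zp p (inverse (p^m)) (Suc m) * Wp p (p^m) (Suc (Suc m)) / ((Dp p (Suc m))^2 * (p*p^m))"
    by (rule wz[OF p0 w0 pw D0])
  also have "\<dots> = 0" using Zp_zero[OF p0, of m "Suc m"] by simp
  finally have "(\<Sum>i<Suc (Suc m). tt p (p*p^m) i) + (\<Sum>i<Suc (Suc m). tt p (p^m) i) / (p*p^m) = 0"
    by (simp only: sum.distrib sum_divide_distrib)
  then have "(\<Sum>i<Suc (Suc m). tt p (p*p^m) i) = - ((\<Sum>i<Suc (Suc m). tt p (p^m) i) / (p*p^m))"
    by (simp add: eq_neg_iff_add_eq_0)
  also have "(\<Sum>i<Suc (Suc m). tt p (p^m) i) = (\<Sum>i<Suc m. tt p (p^m) i)"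
    using tt_zero[OF p0, of m "Suc m"] by simp
  also have "\<dots> = (-1)^m / p^(m*(m+1) div 2)" by (rule Suc)
  also have "Suc m * (Suc m + 1) div 2 = m*(m+1) div 2 + Suc m"
  proof -
    have "Suc m * (Suc m + 1) = m*(m+1) + 2 * Suc m" by (simp add: algebra_simps)
    then show ?thesis by simp
  qed
  ultimately show ?case using p0 by (simp add: power_add field_simps)
qed

lemma hom_sum:
  fixes h :: "'a::comm_monoid_add \<Rightarrow> 'b::comm_monoid_add"
  assumes "h 0 = 0" "\<And>x y. h (x+y) = h x + h y" "finite A"
  shows "h (sum f A) = (\<Sum>x\<in>A. h (f x))"
  using assms(3) by (induct rule: finite_induct) (simp_all add: assms)

lemma map_poly_hom_mult:
  fixes h :: "'a::comm_semiring_1 \<Rightarrow> 'b::comm_semiring_1"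
  assumes "h 0 = 0" "\<And>x y. h (x+y) = h x + h y" "\<And>x y. h (x*y) = h x * h y"
  shows "map_poly h (p*q) = map_poly h p * map_poly h q"
  by (intro poly_eqI) (simp add: coeff_map_poly coeff_mult hom_sum[OF assms(1,2)] assms)

lemma map_poly_hom_add:
  fixes h :: "'a::comm_semiring_1 \<Rightarrow> 'b::comm_semiring_1"
  assumes "h 0 = 0" "\<And>x y. h (x+y) = h x + h y"
  shows "map_poly h (p+q) = map_poly h p + map_poly h q"
  by (intro poly_eqI) (simp add: coeff_map_poly assms)

definition E :: "rat poly \<Rightarrow> bipoly" where "E r = map_poly (\<lambda>x. [:x:]) r"
definition sw :: "bipoly \<Rightarrow> bipoly" where "sw f = poly (map_poly E f) A_pol"

lemma E0 [simp]: "E 0 = 0" by (simp add: E_def)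
lemma E1 [simp]: "E 1 = 1" by (simp add: E_def)
lemma E_add: "E (x+y) = E x + E y"
  unfolding E_def by (rule map_poly_hom_add) auto
lemma E_mult: "E (x*y) = E x * E y"
  unfolding E_def by (rule map_poly_hom_mult) auto
lemma E_pCons: "E (pCons x c) = pCons [:x:] (E c)"
  by (simp add: E_def map_poly_pCons)

lemma sw0 [simp]: "sw 0 = 0" by (simp add: sw_def)
lemma sw1 [simp]: "sw 1 = 1" by (simp add: sw_def)
lemma sw_add: "sw (f+g) = sw f + sw g"
  unfolding sw_def by (subst map_poly_hom_add) (auto simp: E_add)
lemma sw_mult: "sw (f*g) = sw f * sw g"
  unfolding sw_def by (subst map_poly_hom_mult) (auto simp: E_add E_mult)
lemma sw_uminus: "sw (-f) = - sw f"
proof -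
  have "sw (-f) + sw f = 0" by (simp flip: sw_add)
  then show ?thesis by (simp add: eq_neg_iff_add_eq_0)
qed
lemma sw_diff: "sw (f-g) = sw f - sw g"
  using sw_add[of f "-g"] by (simp add: sw_uminus)
lemma sw_power: "sw (f^n) = sw f ^ n"
  by (induct n) (simp_all add: sw_mult)
lemma sw_pCons: "sw (pCons c f) = E c + A_pol * sw f"
  by (simp add: sw_def map_poly_pCons)

lemma sw_E: "sw (E c) = [:c:]"
proof (induction c)
  case 0 then show ?case by simp
next
  case (pCons x c)
  have "sw (E (pCons x c)) = E [:x:] + A_pol * [:c:]"
    by (simp add: E_pCons sw_pCons pCons.IH)
  also have "\<dots> = [:pCons x c:]"
    by (simp add: E_pCons A_pol_def)
  finally show ?case .
qed

lemma sw_A [simp]: "sw A_pol = Q_pol"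
  by (simp add: A_pol_def Q_pol_def sw_pCons E_pCons)
lemma sw_Q [simp]: "sw Q_pol = A_pol"
  by (simp add: Q_pol_def sw_pCons)

lemma sw_sw [simp]: "sw (sw f) = f"
proof (induction f)
  case 0 then show ?case by simp
next
  case (pCons c f)
  have "sw (sw (pCons c f)) = [:c:] + Q_pol * f"
    by (simp add: sw_pCons sw_add sw_mult sw_E pCons.IH)
  also have "\<dots> = pCons c f" by (simp add: Q_pol_def)
  finally show ?case .
qed

lemma sw_dvd: "c dvd D \<Longrightarrow> sw c dvd sw D"
  by (metis dvdE dvdI sw_mult)

lemma unit_lemma:
  fixes c G :: bipoly and d :: "rat poly"
  assumes "c dvd [:d:]" "d \<noteq> 0" "c dvd G" "is_unit (coeff G i)"
  shows "is_unit c"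
proof -
  have "degree c \<le> degree [:d:]" using assms(1,2) by (intro dvd_imp_degree_le) auto
  then have "degree c = 0" by simp
  then have c: "c = [:coeff c 0:]" by (simp add: degree_0_id)
  then have "coeff c 0 dvd coeff G i" using assms(3) by (metis const_poly_dvd_iff)
  then have "coeff c 0 dvd 1" using assms(4) dvd_trans by blast
  then show ?thesis by (subst c) (simp add: is_unit_const_poly_iff)
qed

lemma coprime_const:
  fixes G :: bipoly
  assumes "d \<noteq> 0" "is_unit (coeff G i)"
  shows "coprime [:d:] G"
  using unit_lemma[OF _ assms(1) _ assms(2)] by (intro coprimeI) auto

lemma coprime_sw:
  assumes "coprime (sw D) (sw G)"
  shows "coprime D G"
proof (rule coprimeI)
  fix c assume "c dvd D" "c dvd G"
  then have "is_unit (sw c)" using assms sw_dvd by (meson coprime_common_divisor)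
  then have "sw (sw c) dvd sw 1" by (intro sw_dvd) auto
  then show "is_unit c" by simp
qed

lemma X_pow: "([:0,1:]::'a::comm_semiring_1 poly)^n = monom 1 n"
  by (induct n) (simp_all add: monom_Suc)

lemma A_pow: "A_pol^n = [:[:0,1:]^n:]"
  by (induct n) (simp_all add: A_pol_def)

definition F1 :: "nat \<Rightarrow> bipoly" where "F1 n = 1 - A_pol * Q_pol^n"
definition F2 :: "nat \<Rightarrow> bipoly" where "F2 n = A_pol - Q_pol^n"

lemma coeff_F1: "n \<noteq> 0 \<Longrightarrow> coeff (F1 n) 0 = 1"
  by (simp add: F1_def coeff_mult_0 coeff_0_power Q_pol_def)

lemma coeff_F2: "n \<noteq> 0 \<Longrightarrow> coeff (F2 n) n = -1"
  by (simp add: F2_def Q_pol_def X_pow A_pol_def coeff_pCons split: nat.split)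

lemma coeff_swF1: "n \<noteq> 0 \<Longrightarrow> coeff (sw (F1 n)) 0 = 1"
  by (simp add: F1_def sw_diff sw_mult sw_power coeff_mult_0 Q_pol_def)

lemma coeff_swF2: "coeff (sw (F2 n)) 1 = 1"
  by (simp add: F2_def sw_diff sw_power A_pow) (simp add: Q_pol_def)

lemma cp_const:
  assumes "n \<noteq> 0" "d \<noteq> 0"
  shows "coprime [:d:] (F1 n * F2 n)"
proof -
  have "coprime [:d:] (F1 n)" by (rule coprime_const[OF assms(2), of _ 0]) (simp add: coeff_F1 assms)
  moreover have "coprime [:d:] (F2 n)" by (rule coprime_const[OF assms(2), of _ n]) (simp add: coeff_F2 assms)
  ultimately show ?thesis by simp
qed

lemma cp_sw:
  assumes "n \<noteq> 0" "d \<noteq> 0" "sw D = [:d:]"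
  shows "coprime D (F1 n * F2 n)"
proof -
  have "coprime [:d:] (sw (F1 n))" by (rule coprime_const[OF assms(2), of _ 0]) (simp add: coeff_swF1 assms)
  then have "coprime D (F1 n)" using assms(3) coprime_sw by metis
  moreover have "coprime [:d:] (sw (F2 n))" by (rule coprime_const[OF assms(2), of _ 1]) (use coeff_swF2[of n] in simp)
  then have "coprime D (F2 n)" using assms(3) coprime_sw by metis
  ultimately show ?thesis by simp
qed

lemma cpA: "n \<noteq> 0 \<Longrightarrow> coprime A_pol (F1 n * F2 n)"
  unfolding A_pol_def by (rule cp_const) auto

lemma cpQ: "n \<noteq> 0 \<Longrightarrow> coprime Q_pol (F1 n * F2 n)"
  by (rule cp_sw[of n "[:0,1:]"]) (auto simp: A_pol_def)

lemma cpD: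
  assumes "n \<noteq> 0" "m \<noteq> 0"
  shows "coprime (1 - Q_pol^m) (F1 n * F2 n)"
proof -
  have d: "1 - [:0,1:]^m \<noteq> (0::rat poly)"
  proof
    assume "1 - [:0,1:]^m = (0::rat poly)"
    then have "coeff (1 - [:0,1:]^m) m = (0::rat)" by simp
    moreover have "coeff (1 - [:0,1:]^m) m = (-1::rat)" using assms(2) by (simp add: X_pow)
    ultimately show False by simp
  qed
  show ?thesis by (rule cp_sw[OF assms(1) d]) (simp add: sw_diff sw_power A_pow, simp add: one_pCons)
qed

definition good :: "bipoly \<Rightarrow> ratfun \<Rightarrow> bool" where
  "good P X \<longleftrightarrow> (\<exists>C D. D \<noteq> 0 \<and> coprime D P \<and> X = to_fract C / to_fract D)"

lemma good_poly: "good P (to_fract C)"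
  unfolding good_def by (rule exI[of _ C], rule exI[of _ 1]) simp

lemma good_inv: "D \<noteq> 0 \<Longrightarrow> coprime D P \<Longrightarrow> good P (inverse (to_fract D))"
  unfolding good_def by (rule exI[of _ 1], rule exI[of _ D]) (simp add: divide_inverse)

lemma good_add: assumes "good P X" "good P Y" shows "good P (X + Y)"
proof -
  obtain C1 D1 C2 D2 where h: "D1 \<noteq> 0" "coprime D1 P" "X = to_fract C1 / to_fract D1"
    "D2 \<noteq> 0" "coprime D2 P" "Y = to_fract C2 / to_fract D2"
    using assms unfolding good_def by blast
  show ?thesis unfolding good_def
    by (rule exI[of _ "C1*D2 + C2*D1"], rule exI[of _ "D1*D2"]) (use h in \<open>simp add: field_simps\<close>)
qed

lemma good_mult: assumes "good P X" "good P Y" shows "good P (X * Y)"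
proof -
  obtain C1 D1 C2 D2 where h: "D1 \<noteq> 0" "coprime D1 P" "X = to_fract C1 / to_fract D1"
    "D2 \<noteq> 0" "coprime D2 P" "Y = to_fract C2 / to_fract D2"
    using assms unfolding good_def by blast
  show ?thesis unfolding good_def
    by (rule exI[of _ "C1*C2"], rule exI[of _ "D1*D2"]) (use h in \<open>simp add: field_simps\<close>)
qed

lemma good_uminus: assumes "good P X" shows "good P (- X)"
proof -
  have "good P (to_fract (-1) * X)" by (rule good_mult[OF good_poly assms])
  then show ?thesis by simp
qed

lemma good_diff: "good P X \<Longrightarrow> good P Y \<Longrightarrow> good P (X - Y)"
  using good_add[of P X "-Y"] good_uminus[of P Y] by simp

lemma good_one: "good P 1" using good_poly[of P 1] by simp

lemma good_prod: "(\<And>j. j < (k::nat) \<Longrightarrow> good P (f j)) \<Longrightarrow> good P (\<Prod>j<k. f j)"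
  by (induct k) (simp_all add: good_one good_mult)

lemma good_sum: "(\<And>j. j < (k::nat) \<Longrightarrow> good P (f j)) \<Longrightarrow> good P (\<Sum>j<k. f j)"
proof (induct k)
  case 0 then show ?case using good_poly[of P 0] by simp
qed (simp_all add: good_add)

lemma good_power: "good P X \<Longrightarrow> good P (X ^ (k::nat))"
  by (induct k) (simp_all add: good_one good_mult)

definition cg :: "bipoly \<Rightarrow> ratfun \<Rightarrow> ratfun \<Rightarrow> bool" where
  "cg P X Y \<longleftrightarrow> (\<exists>Z. good P Z \<and> X - Y = to_fract P * Z)"

lemma cg_mult:
  assumes "cg P X Y" "cg P X' Y'" "good P X" "good P Y'"
  shows "cg P (X * X') (Y * Y')"
proof -
  obtain Z Z' where h: "good P Z" "X - Y = to_fract P * Z" "good P Z'" "X' - Y' = to_fract P * Z'"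
    using assms(1,2) unfolding cg_def by blast
  have "X * X' - Y * Y' = X * (X' - Y') + (X - Y) * Y'" by (simp add: algebra_simps)
  also have "\<dots> = to_fract P * (X * Z' + Z * Y')" by (simp add: h algebra_simps)
  finally show ?thesis unfolding cg_def
    using good_add[OF good_mult[OF assms(3) h(3)] good_mult[OF h(1) assms(4)]] by blast
qed

lemma cg_add:
  assumes "cg P X Y" "cg P X' Y'"
  shows "cg P (X + X') (Y + Y')"
proof -
  obtain Z Z' where h: "good P Z" "X - Y = to_fract P * Z" "good P Z'" "X' - Y' = to_fract P * Z'"
    using assms(1,2) unfolding cg_def by blast
  have "X + X' - (Y + Y') = (X - Y) + (X' - Y')" by simp
  also have "\<dots> = to_fract P * (Z + Z')" unfolding h(2,4) by (simp add: algebra_simps)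
  finally have "X + X' - (Y + Y') = to_fract P * (Z + Z')" .
  then show ?thesis unfolding cg_def using good_add[OF h(1,3)] by blast
qed

lemma cg_refl: "cg P X X" unfolding cg_def using good_poly[of P 0] by (intro exI[of _ 0]) simp

lemma cg_prod:
  fixes k :: nat
  assumes "\<And>j. j < k \<Longrightarrow> cg P (f j) (g j)" "\<And>j. j < k \<Longrightarrow> good P (f j)" "\<And>j. j < k \<Longrightarrow> good P (g j)"
  shows "cg P (\<Prod>j<k. f j) (\<Prod>j<k. g j)"
  using assms
proof (induct k)
  case 0 then show ?case by (simp add: cg_refl)
next
  case (Suc k)
  show ?case unfolding prod.lessThan_Suc
    by (rule cg_mult) (use Suc in \<open>auto intro: good_prod\<close>)
qed

lemma cg_sum:
  fixes k :: nat
  assumes "\<And>j. j < k \<Longrightarrow> cg P (f j) (g j)"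
  shows "cg P (\<Sum>j<k. f j) (\<Sum>j<k. g j)"
  using assms
proof (induct k)
  case 0 then show ?case by (simp add: cg_refl)
next
  case (Suc k)
  show ?case unfolding sum.lessThan_Suc
    by (rule cg_add) (use Suc in auto)
qed

lemma cg_rf: assumes "cg P X Y" shows "rf_cong X Y P"
proof -
  obtain C D where "D \<noteq> 0" "coprime D P" "X - Y = to_fract P * (to_fract C / to_fract D)"
    using assms unfolding cg_def good_def by blast
  then show ?thesis unfolding rf_cong_def by (intro exI[of _ C] exI[of _ D]) simp
qed

lemma to_fract_power: "to_fract (x ^ k) = to_fract x ^ k"
  by (induct k) simp_all

lemma inv_prod: "(\<Prod>j<k. inverse (g j)) = inverse (\<Prod>j<(k::nat). g j :: 'a::field)"
  by (induct k) (simp_all add: inverse_mult_distrib)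

lemma a0: "a_var \<noteq> 0" by (simp add: a_var_def A_pol_def)
lemma q0: "q_var \<noteq> 0" by (simp add: q_var_def Q_pol_def)

lemma Qpow_ne1: "m \<noteq> 0 \<Longrightarrow> 1 - Q_pol^m \<noteq> 0"
proof
  assume m: "m \<noteq> 0" and h: "1 - Q_pol^m = 0"
  have "coeff (1 - Q_pol^m) m = (-1 :: rat poly)" using m by (simp add: Q_pol_def X_pow)
  then show False using h by simp
qed

lemma qden: "1 - q_var^2 * (q_var^2)^j = to_fract (1 - Q_pol^(2*j+2))"
  by (simp add: q_var_def to_fract_power power_mult[symmetric] power_add[symmetric] algebra_simps)

lemma qden0: "1 - (q_var^2)^(Suc j) \<noteq> 0"
proof -
  have "1 - (q_var^2)^(Suc j) = 1 - q_var^2 * (q_var^2)^j" by simp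
  also have "\<dots> = to_fract (1 - Q_pol^(2*j+2))" by (rule qden)
  moreover have "1 - Q_pol^(2*j+2) \<noteq> 0" by (rule Qpow_ne1) simp
  ultimately show ?thesis by (metis to_fract_eq_0_iff)
qed

theorem theorem1p7:
  fixes n :: nat
  assumes "odd n"
  shows "rf_cong
    (\<Sum>k<n. qpoch (a_var * q_var) (q_var ^ 2) k * qpoch (q_var / a_var) (q_var ^ 2) k
              / (qpoch (q_var ^ 2) (q_var ^ 2) k) ^ 2)
    ((-1) ^ ((n - 1) div 2) * q_var powi ((1 - int n ^ 2) div 4))
    ((1 - A_pol * Q_pol ^ n) * (A_pol - Q_pol ^ n))"
proof -
  define m where "m = (n - 1) div 2"
  have nm: "n = Suc (2*m)" using assms unfolding m_def by (auto elim: oddE)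
  have n0: "n \<noteq> 0" using nm by simp
  define P where "P = F1 n * F2 n"
  have Peq: "(1 - A_pol * Q_pol ^ n) * (A_pol - Q_pol ^ n) = P" by (simp add: P_def F1_def F2_def)
  define a where "a = a_var"
  define q where "q = q_var"
  have a0': "a \<noteq> 0" using a0 by (simp add: a_def)
  have q0': "q \<noteq> 0" using q0 by (simp add: q_def)
  have tP: "to_fract P = (1 - a*q^n)*(a - q^n)"
    by (simp add: P_def F1_def F2_def a_def q_def a_var_def q_var_def to_fract_power)
  have ga: "good P a" by (simp add: a_def a_var_def good_poly)
  have gq: "good P q" by (simp add: q_def q_var_def good_poly)
  have gia: "good P (inverse a)" unfolding a_def a_var_def
    by (rule good_inv) (use cpA[OF n0] in \<open>simp_all add: A_pol_def P_def\<close>)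
  have giq: "good P (inverse q)" unfolding q_def q_var_def
    by (rule good_inv) (use cpQ[OF n0] in \<open>simp_all add: Q_pol_def P_def\<close>)
  have gden: "good P (inverse (1 - q^2 * (q^2)^j))" for j
    unfolding q_def qden
    by (rule good_inv) (use cpD[OF n0, of "2*j+2"] Qpow_ne1[of "2*j+2"] in \<open>simp_all add: P_def\<close>)
  define f where "f j = (1 - a*q*(q^2)^j) * (1 - q/a*(q^2)^j)" for j
  define e where "e j = (1 - q*(q^2)^j*inverse (q^n)) * (1 - q*(q^2)^j*q^n)" for j
  define G where "G k = (\<Prod>j<k. inverse (1 - q^2 * (q^2)^j))^2" for k
  have gf: "good P (f j)" for j unfolding f_def divide_inverse
    by (intro good_mult good_diff good_one good_power ga gq gia)
  have ge: "good P (e j)" for j unfolding e_def power_inverse[symmetric]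
    by (intro good_mult good_diff good_one good_power gq giq)
  have gG: "good P (G k)" for k unfolding G_def
    by (intro good_power good_prod gden)
  have cfe: "cg P (f j) (e j)" for j
  proof -
    have "f j - e j = to_fract P * (q*(q^2)^j*inverse a*inverse (q^n))"
      unfolding f_def e_def tP using a0' q0' by (simp add: field_simps power2_eq_square)
    moreover have "good P (q*(q^2)^j*inverse a*inverse (q^n))" unfolding power_inverse[symmetric]
      by (intro good_mult good_power gq gia giq)
    ultimately show ?thesis unfolding cg_def by blast
  qed
  have termeq: "qpoch (a_var * q_var) (q_var ^ 2) k * qpoch (q_var / a_var) (q_var ^ 2) k
              / (qpoch (q_var ^ 2) (q_var ^ 2) k) ^ 2 = (\<Prod>j<k. f j) * G k" for k
    unfolding qpoch_def G_def f_def a_def[symmetric] q_def[symmetric]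
    by (simp add: prod.distrib divide_inverse inv_prod power_inverse mult.assoc)
  have c1: "cg P (\<Sum>k<n. (\<Prod>j<k. f j) * G k) (\<Sum>k<n. (\<Prod>j<k. e j) * G k)"
    by (intro cg_sum cg_mult cg_prod cfe gf ge cg_refl good_prod gG)
  define p where "p = q^2"
  have p0: "p \<noteq> 0" using q0' by (simp add: p_def)
  have D0: "1 - p^(Suc i) \<noteq> 0" for i using qden0[of i] by (simp add: p_def q_def)
  have ett: "(\<Prod>j<k. e j) * G k = tt p (p^m) k" for k
  proof -
    have "e j = (1 - p^j * inverse (p^m)) * (1 - p^(j+1) * p^m)" for j
    proof -
      have qn: "q^n = q * p^m" by (simp add: nm p_def power_mult)
      show ?thesis unfolding e_def qn using q0' by (simp add: p_def field_simps) (simp add: power2_eq_square algebra_simps)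
    qed
    then have "(\<Prod>j<k. e j) = Zp p (inverse (p^m)) k * Wp p (p^m) k"
      by (simp add: Zp_def Wp_def prod.distrib)
    moreover have "G k = inverse ((Dp p k)^2)"
      by (simp add: G_def Dp_def p_def inv_prod power_inverse)
    ultimately show ?thesis by (simp add: tt_def divide_inverse)
  qed
  have "(\<Sum>k<n. (\<Prod>j<k. e j) * G k) = (\<Sum>k<n. tt p (p^m) k)" by (simp add: ett)
  also have "\<dots> = (\<Sum>k<Suc m. tt p (p^m) k)"
    by (rule sum.mono_neutral_right) (auto simp: nm tt_zero[OF p0])
  also have "\<dots> = (-1)^m / p^(m*(m+1) div 2)" by (rule sum_closed[OF p0 D0])
  also have "\<dots> = (-1) ^ ((n - 1) div 2) * q_var powi ((1 - int n ^ 2) div 4)"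
  proof -
    have ev: "even (m*(m+1))" by simp
    have e1: "p^(m*(m+1) div 2) = q^(m*(m+1))"
      unfolding p_def power_mult[symmetric] using ev by simp
    have e2: "(1 - int n ^ 2) div 4 = - int (m*(m+1))"
    proof -
      have "1 - int n ^ 2 = 4 * (- int (m*(m+1)))" by (simp add: nm algebra_simps power2_eq_square)
      then show ?thesis by simp
    qed
    show ?thesis unfolding e1 e2 power_int_minus power_int_of_nat m_def[symmetric] q_def
      by (simp add: divide_inverse)
  qed
  finally have c2: "(\<Sum>k<n. (\<Prod>j<k. e j) * G k) = (-1) ^ ((n - 1) div 2) * q_var powi ((1 - int n ^ 2) div 4)" .
  have "cg P (\<Sum>k<n. qpoch (a_var * q_var) (q_var ^ 2) k * qpoch (q_var / a_var) (q_var ^ 2) k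
              / (qpoch (q_var ^ 2) (q_var ^ 2) k) ^ 2)
    ((-1) ^ ((n - 1) div 2) * q_var powi ((1 - int n ^ 2) div 4))"
    using c1 unfolding termeq c2 .
  then show ?thesis unfolding Peq by (rule cg_rf)
qed

end
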